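(* Let $P$ be a distribution on $\mathcal X\times\mathcal Y$, where every $\mathbf x\in\mathcal X\subseteq\mathbb R^d$ satisfies $\|\mathbf x\|\le 1$ and $\mathcal Y=\{-1,+1\}$ (classification) or $\mathcal Y=[-1,1]$ (regression), and let $(\mathbf x_1,y_1),\dots,(\mathbf x_n,y_n)$ be i.i.d. samples from $P$. Let $R>0$ and $\mathscr W=\{\mathbf w\in\mathbb R^d:\|\mathbf w\|\le R\}$. Let $\ell:\mathbb R\to\mathbb R_+$ be a convex loss such that $z\mapsto\exp(-\alpha\ell(z))$ is concave for $|z|\le R$ (for some $\alpha>0$) and $|\ell'(z)|\le G$. Let $\mathcal L(\mathbf w)=\mathrm E_{(\mathbf x,y)\sim P}[\ell(y\mathbf w^\top\mathbf x)]$ and $\mathbf w_*\in\arg\min_{\mathbf w\in\mathscr W}\mathcal L(\mathbf w)$. Suppose Assumption (I) holds with constant $\theta>0$, i.e. $\mathrm E[(\ell'(y\mathbf w_*^\top\mathbf x))^2\mathbf x\mathbf x^\top]\succeq\theta\,\mathrm E[\mathbf x\mathbf x^\top]$. Let $\widehat{\mathbf w}_*$ be a solution of $\min_{\mathbf w\in\mathscr W}\frac1n\sum_{i=1}^n\ell(y_i\mathbf w^\top\mathbf x_i)$. Define \[ \gamma=\max\left(1,\frac{G^2}{\theta},\frac{G}{\alpha\theta R}\right),\qquad \rho_0=\max\left(32\gamma,\sqrt{\gamma\left(28+\frac{3}{GR}\right)}\right). \] Then for any $t>0$, with probability at least $1-2me^{-t}$, where $m=\lceil\log_2 n\rceil$,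 \[ \mathcal L(\widehat{\mathbf w}_* )-\mathcal L(\mathbf w_* )\le\left(GR\left[32\rho_0+28\right]+3\right)\frac{t+2+d\log n}{n}. \]
   Context: $\ell'$ denotes the derivative of $\ell$; $\succeq$ denotes the positive semidefinite (Loewner) order; expectations are over $(\mathbf x,y)\sim P$. *)

theory Defs
  imports "HOL-Probability.Probability"
begin

definition pop_risk :: "('a::euclidean_space \<times> real) measure \<Rightarrow> (real \<Rightarrow> real) \<Rightarrow> 'a \<Rightarrow> real" where
  "pop_risk P loss w = (\<integral>z. loss (snd z * (w \<bullet> fst z)) \<partial>P)"

definition emp_risk :: "nat \<Rightarrow> (nat \<Rightarrow> 'a::euclidean_space \<times> real) \<Rightarrow> (real \<Rightarrow> real) \<Rightarrow> 'a \<Rightarrow> real" where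
  "emp_risk n S loss w = (\<Sum>i<n. loss (snd (S i) * (w \<bullet> fst (S i)))) / real n"

text \<open>Second-moment matrices, via their quadratic forms v^T M v (Loewner order unfolded).\<close>
definition weighted_second_moment_form ::
  "('a::euclidean_space \<times> real) measure \<Rightarrow> ('a \<times> real \<Rightarrow> real) \<Rightarrow> 'a \<Rightarrow> real" where
  "weighted_second_moment_form P c v = (\<integral>z. c z * (v \<bullet> fst z)\<^sup>2 \<partial>P)"

end

theory Submission
  imports Defs
begin


locale erm_setting =
  fixes P :: "('a::euclidean_space \<times> real) measure"
    and loss loss' :: "real \<Rightarrow> real"
    and R G \<alpha> :: real and ws :: 'a
  assumes P_prob: "prob_space P"
    and P_sets: "sets P = sets borel"
    and P_support: "AE z in P. norm (fst z) \<le> 1 \<and> \<bar>snd z\<bar> \<le> 1"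
    and R_pos: "R > 0" and G_pos: "G > 0" and alpha_pos: "\<alpha> > 0"
    and loss_convex: "convex_on UNIV loss"
    and loss_deriv: "\<And>z. \<bar>z\<bar> \<le> R \<Longrightarrow> (loss has_real_derivative loss' z) (at z)"
    and loss_exp_concave: "concave_on {-R..R} (\<lambda>z. exp (- \<alpha> * loss z))"
    and loss_lipschitz: "\<And>z. \<bar>z\<bar> \<le> R \<Longrightarrow> \<bar>loss' z\<bar> \<le> G"
    and ws_feas: "norm ws \<le> R"
    and ws_min: "\<And>w. norm w \<le> R \<Longrightarrow> pop_risk P loss ws \<le> pop_risk P loss w"
begin

sublocale prob_space P by (rule P_prob)

definition lw :: "'a \<Rightarrow> 'a \<times> real \<Rightarrow> real" where
  "lw w z = loss (snd z * (w \<bullet> fst z))"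

definition supp :: "'a \<times> real \<Rightarrow> bool" where
  "supp z \<longleftrightarrow> norm (fst z) \<le> 1 \<and> \<bar>snd z\<bar> \<le> 1"

lemma AE_supp: "AE z in P. supp z"
  using P_support by (simp add: supp_def)

lemma loss_lip:
  assumes "\<bar>a\<bar> \<le> R" "\<bar>b\<bar> \<le> R"
  shows "\<bar>loss a - loss b\<bar> \<le> G * \<bar>a - b\<bar>"
proof -
  have main: "\<bar>loss b - loss a\<bar> \<le> G * \<bar>b - a\<bar>" if "a < b" "\<bar>a\<bar> \<le> R" "\<bar>b\<bar> \<le> R" for a b
  proof -
    have der: "\<And>x. a \<le> x \<Longrightarrow> x \<le> b \<Longrightarrow> (loss has_real_derivative loss' x) (at x)"
      using loss_deriv that by auto
    obtain z where z: "a < z" "z < b" "loss b - loss a = (b - a) * loss' z"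
      using MVT2[OF \<open>a < b\<close> der] by blast
    have "\<bar>z\<bar> \<le> R" using z that by auto
    then have "\<bar>loss' z\<bar> \<le> G" by (rule loss_lipschitz)
    then show ?thesis using z that by (simp add: abs_mult mult.commute mult_left_mono)
  qed
  consider "a < b" | "a = b" | "b < a" by linarith
  then show ?thesis
  proof cases
    case 1 then show ?thesis using main[of a b] assms by (simp add: abs_minus_commute)
  next
    case 2 then show ?thesis using G_pos by simp
  next
    case 3 then show ?thesis using main[of b a] assms by simp
  qed
qed

lemma loss_cont: "continuous_on UNIV loss"
  using convex_on_continuous[OF open_UNIV loss_convex] .

lemma lw_meas[measurable]: "lw w \<in> borel_measurable P"
proof -
  have "continuous_on UNIV (lw w)"
    unfolding lw_def
    by (intro continuous_on_compose2[OF loss_cont] continuous_intros) auto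
  then have "lw w \<in> borel_measurable borel" by (rule borel_measurable_continuous_onI)
  then show ?thesis by (simp only: measurable_cong_sets[OF P_sets refl])
qed

lemma supp_inner:
  assumes "supp z" "norm w \<le> r"
  shows "\<bar>snd z * (w \<bullet> fst z)\<bar> \<le> r"
proof -
  have "\<bar>w \<bullet> fst z\<bar> \<le> norm w * norm (fst z)" by (rule Cauchy_Schwarz_ineq2)
  also have "\<dots> \<le> r * 1" using assms order_trans[OF norm_ge_zero assms(2)] by (intro mult_mono) (auto simp: supp_def)
  finally have "\<bar>w \<bullet> fst z\<bar> \<le> r" by simp
  moreover have "\<bar>snd z\<bar> \<le> 1" using assms by (simp add: supp_def)
  ultimately show ?thesis
    by (simp add: abs_mult) (metis abs_ge_zero mult_le_one mult.commute mult_mono order_trans mult_1)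
qed

lemma lw_lip:
  assumes "supp z" "norm w \<le> R" "norm v \<le> R"
  shows "\<bar>lw w z - lw v z\<bar> \<le> G * norm (w - v)"
proof -
  have "\<bar>lw w z - lw v z\<bar> \<le> G * \<bar>snd z * (w \<bullet> fst z) - snd z * (v \<bullet> fst z)\<bar>"
    unfolding lw_def by (intro loss_lip supp_inner assms)
  also have "snd z * (w \<bullet> fst z) - snd z * (v \<bullet> fst z) = snd z * ((w - v) \<bullet> fst z)"
    by (simp add: inner_diff_left algebra_simps)
  also have "\<bar>\<dots>\<bar> \<le> norm (w - v)" by (rule supp_inner[OF assms(1)]) simp
  finally show ?thesis using G_pos by (simp add: mult_left_mono)
qed

lemma lw_bound:
  assumes "supp z" "norm w \<le> R"
  shows "\<bar>lw w z\<bar> \<le> \<bar>loss 0\<bar> + G * R"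
proof -
  have "\<bar>lw w z - lw 0 z\<bar> \<le> G * norm (w - 0)" using R_pos by (intro lw_lip assms) auto
  also have "\<dots> \<le> G * R" using assms G_pos by (simp add: mult_left_mono)
  finally show ?thesis by (simp add: lw_def)
qed

lemma lw_int: "norm w \<le> R \<Longrightarrow> integrable P (lw w)"
  by (rule integrable_const_bound[where B="\<bar>loss 0\<bar> + G * R"])
     (use AE_supp lw_bound in \<open>auto elim!: AE_mp\<close>)

lemma pop_risk_lw: "pop_risk P loss w = (\<integral>z. lw w z \<partial>P)"
  by (simp add: pop_risk_def lw_def)

lemma pop_lip:
  assumes "norm w \<le> R" "norm v \<le> R"
  shows "\<bar>pop_risk P loss w - pop_risk P loss v\<bar> \<le> G * norm (w - v)"
proof -
  have "pop_risk P loss w - pop_risk P loss v = (\<integral>z. lw w z - lw v z \<partial>P)"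
    by (simp add: pop_risk_lw Bochner_Integration.integral_diff lw_int assms)
  also have "\<bar>\<dots>\<bar> \<le> (\<integral>z. \<bar>lw w z - lw v z\<bar> \<partial>P)" by (rule integral_abs_bound)
  also have "\<dots> \<le> (\<integral>z. G * norm (w - v) \<partial>P)"
    by (rule integral_mono_AE) (use AE_supp lw_lip assms lw_int in \<open>auto elim!: AE_mp\<close>)
  also have "\<dots> = G * norm (w - v)" by (simp add: prob_space)
  finally show ?thesis .
qed

end

context erm_setting begin

lemma pointwise_central:
  assumes z: "supp z" and w: "norm w \<le> R"
    and K: "K = exp (2 * \<alpha> * G * R)"
    and lam: "0 < l" "l \<le> 1 / (2 * K)"
  shows "lw ((1 - l) *\<^sub>R ws + l *\<^sub>R w) z
           \<le> lw ws z - (l * (exp (\<alpha> * (lw ws z - lw w z)) - 1) - 2 * l\<^sup>2 * K\<^sup>2) / \<alpha>"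
proof -
  define a where "a = lw ws z"
  define b where "b = lw w z"
  define c where "c = lw ((1 - l) *\<^sub>R ws + l *\<^sub>R w) z"
  define v where "v = exp (\<alpha> * (a - b))"
  define ps where "ps = snd z * (ws \<bullet> fst z)"
  define p where "p = snd z * (w \<bullet> fst z)"
  have K1: "K \<ge> 1" using K alpha_pos G_pos R_pos by simp
  have l1: "l \<le> 1"
  proof -
    have "1 / (2 * K) \<le> 1" using K1 by simp
    then show ?thesis using lam by linarith
  qed
  have ps: "ps \<in> {-R..R}" using supp_inner[OF z ws_feas] by (auto simp: ps_def)
  have pp: "p \<in> {-R..R}" using supp_inner[OF z w] by (auto simp: p_def)
  have pl: "snd z * (((1 - l) *\<^sub>R ws + l *\<^sub>R w) \<bullet> fst z) = (1 - l) *\<^sub>R ps + l *\<^sub>R p"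
    by (simp add: ps_def p_def inner_add_left algebra_simps)
  have conc: "exp (- \<alpha> * loss ((1 - l) *\<^sub>R ps + l *\<^sub>R p))
      \<ge> (1 - l) * exp (- \<alpha> * loss ps) + l * exp (- \<alpha> * loss p)"
    using concave_onD[OF loss_exp_concave, of l ps p] lam l1 ps pp by simp
  have ec: "exp (- \<alpha> * c) \<ge> (1 - l) * exp (- \<alpha> * a) + l * exp (- \<alpha> * b)"
    using conc pl by (simp add: c_def a_def b_def lw_def ps_def p_def)
  have eb: "exp (- \<alpha> * b) = exp (- \<alpha> * a) * v"
    by (simp add: v_def exp_add[symmetric] algebra_simps)
  have ab: "\<bar>a - b\<bar> \<le> G * norm (ws - w)" unfolding a_def b_def by (rule lw_lip[OF z ws_feas w])
  have nw: "norm (ws - w) \<le> 2 * R" using norm_triangle_ineq4[of ws w] ws_feas w by linarith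
  have "G * norm (ws - w) \<le> G * (2 * R)" using nw G_pos by (intro mult_left_mono) auto
  then have "a - b \<le> G * (2 * R)" using ab by linarith
  then have "\<alpha> * (a - b) \<le> \<alpha> * (G * (2 * R))"
    using alpha_pos by (intro mult_left_mono) auto
  then have vK: "v \<le> K" unfolding v_def K by (simp add: algebra_simps)
  have v0: "v > 0" by (simp add: v_def)
  have vm1: "\<bar>v - 1\<bar> \<le> K" using vK v0 K1 by linarith
  define x where "x = l * (v - 1)"
  have xabs: "\<bar>x\<bar> \<le> l * K" using vm1 lam by (simp add: x_def abs_mult mult_left_mono)
  have lK: "l * K \<le> 1/2" using lam K1 by (simp add: field_simps)
  have xh: "\<bar>x\<bar> \<le> 1/2" using xabs lK by linarith
  have q0: "1 + x > 0" using xh by linarith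
  have lnb: "ln (1 + x) \<ge> x - 2 * x\<^sup>2" using abs_ln_one_plus_x_minus_x_bound[OF xh] by linarith
  have x2: "x\<^sup>2 \<le> l\<^sup>2 * K\<^sup>2"
  proof -
    have "x\<^sup>2 = \<bar>x\<bar>\<^sup>2" by simp
    also have "\<dots> \<le> (l * K)\<^sup>2" using xabs by (intro power_mono) auto
    finally show ?thesis by (simp add: power_mult_distrib)
  qed
  have "exp (- \<alpha> * c) \<ge> exp (- \<alpha> * a) * (1 + x)"
    using ec eb by (simp add: x_def algebra_simps)
  also have "exp (- \<alpha> * a) * (1 + x) = exp (- \<alpha> * a + ln (1 + x))"
    using q0 by (simp add: exp_add[of "- \<alpha> * a" "ln (1 + x)", simplified] mult.commute)
  finally have "- \<alpha> * a + ln (1 + x) \<le> - \<alpha> * c" by simp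
  then have "\<alpha> * c \<le> \<alpha> * a - (x - 2 * l\<^sup>2 * K\<^sup>2)" using lnb x2 by linarith
  then have "c \<le> a - (x - 2 * l\<^sup>2 * K\<^sup>2) / \<alpha>" using alpha_pos by (simp add: field_simps)
  then show ?thesis by (simp add: a_def b_def c_def v_def x_def)
qed

lemma diff_bound:
  assumes z: "supp z" and w: "norm w \<le> R"
  shows "\<bar>lw ws z - lw w z\<bar> \<le> 2 * G * R"
proof -
  have ab: "\<bar>lw ws z - lw w z\<bar> \<le> G * norm (ws - w)" by (rule lw_lip[OF z ws_feas w])
  have nw: "norm (ws - w) \<le> 2 * R" using norm_triangle_ineq4[of ws w] ws_feas w by linarith
  have "G * norm (ws - w) \<le> G * (2 * R)" using nw G_pos by (intro mult_left_mono) auto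
  then show ?thesis using ab by linarith
qed

lemma expdiff_int:
  assumes w: "norm w \<le> R"
  shows "integrable P (\<lambda>z. exp (s * (lw ws z - lw w z)))"
proof (rule integrable_const_bound[where B="exp (\<bar>s\<bar> * (2 * G * R))"])
  show "AE z in P. norm (exp (s * (lw ws z - lw w z))) \<le> exp (\<bar>s\<bar> * (2 * G * R))"
    using AE_supp
  proof (rule AE_mp, intro AE_I2 impI)
    fix z assume z: "supp z"
    have "s * (lw ws z - lw w z) \<le> \<bar>s\<bar> * \<bar>lw ws z - lw w z\<bar>"
      by (metis abs_ge_self abs_mult)
    also have "\<dots> \<le> \<bar>s\<bar> * (2 * G * R)" using diff_bound[OF z w] by (intro mult_left_mono) auto
    finally show "norm (exp (s * (lw ws z - lw w z))) \<le> exp (\<bar>s\<bar> * (2 * G * R))" by simp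
  qed
qed measurable

lemma central:
  assumes w: "norm w \<le> R"
  shows "(\<integral>z. exp (\<alpha> * (lw ws z - lw w z)) \<partial>P) \<le> 1"
proof (rule ccontr)
  define V where "V z = exp (\<alpha> * (lw ws z - lw w z))" for z
  define K where "K = exp (2 * \<alpha> * G * R)"
  define EV where "EV = (\<integral>z. V z \<partial>P)"
  assume "\<not> (\<integral>z. exp (\<alpha> * (lw ws z - lw w z)) \<partial>P) \<le> 1"
  then have EV1: "EV > 1" by (simp add: EV_def V_def)
  have K1: "K \<ge> 1" using alpha_pos G_pos R_pos by (simp add: K_def)
  have Vint: "integrable P V" unfolding V_def by (rule expdiff_int[OF w])
  have key: "l * (EV - 1) - 2 * l\<^sup>2 * K\<^sup>2 \<le> 0" if lam: "0 < l" "l \<le> 1 / (2 * K)" for l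
  proof -
    define wl where "wl = (1 - l) *\<^sub>R ws + l *\<^sub>R w"
    have l1: "l \<le> 1"
    proof -
      have "1 / (2 * K) \<le> 1" using K1 by simp
      then show ?thesis using lam by linarith
    qed
    have "norm wl \<le> norm ((1 - l) *\<^sub>R ws) + norm (l *\<^sub>R w)"
      unfolding wl_def by (rule norm_triangle_ineq)
    also have "\<dots> = (1 - l) * norm ws + l * norm w" using lam l1 by simp
    also have "\<dots> \<le> (1 - l) * R + l * R"
      using lam l1 ws_feas w by (intro add_mono mult_left_mono) auto
    finally have wlR: "norm wl \<le> R" by (simp add: algebra_simps)
    have "pop_risk P loss ws \<le> pop_risk P loss wl" by (rule ws_min[OF wlR])
    also have "\<dots> = (\<integral>z. lw wl z \<partial>P)" by (rule pop_risk_lw)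
    also have "\<dots> \<le> (\<integral>z. lw ws z - (l * (V z - 1) - 2 * l\<^sup>2 * K\<^sup>2) / \<alpha> \<partial>P)"
    proof (rule integral_mono_AE)
      show "integrable P (lw wl)" by (rule lw_int[OF wlR])
      show "integrable P (\<lambda>z. lw ws z - (l * (V z - 1) - 2 * l\<^sup>2 * K\<^sup>2) / \<alpha>)"
        using Vint lw_int[OF ws_feas] by (intro Bochner_Integration.integrable_diff integrable_divide_zero integrable_mult_right integrable_const) auto
      show "AE z in P. lw wl z \<le> lw ws z - (l * (V z - 1) - 2 * l\<^sup>2 * K\<^sup>2) / \<alpha>"
        using AE_supp
        by (rule AE_mp, intro AE_I2 impI)
           (unfold wl_def V_def, rule pointwise_central[OF _ w K_def lam])
    qed
    also have "\<dots> = pop_risk P loss ws - (l * (EV - 1) - 2 * l\<^sup>2 * K\<^sup>2) / \<alpha>"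
    proof -
      have "(\<lambda>z. lw ws z - (l * (V z - 1) - 2 * l\<^sup>2 * K\<^sup>2) / \<alpha>)
          = (\<lambda>z. lw ws z - (l / \<alpha>) * V z + (l + 2 * l\<^sup>2 * K\<^sup>2) / \<alpha>)"
        by (rule ext) (simp add: diff_divide_distrib add_divide_distrib right_diff_distrib)
      moreover have "(\<integral>z. lw ws z - (l / \<alpha>) * V z + (l + 2 * l\<^sup>2 * K\<^sup>2) / \<alpha> \<partial>P)
          = (\<integral>z. lw ws z \<partial>P) - (l / \<alpha>) * EV + (l + 2 * l\<^sup>2 * K\<^sup>2) / \<alpha>"
        using Vint lw_int[OF ws_feas]
        by (simp add: Bochner_Integration.integral_add Bochner_Integration.integral_diff prob_space EV_def)
      ultimately show ?thesis using alpha_pos by (simp add: pop_risk_lw field_simps)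
    qed
    finally have "(l * (EV - 1) - 2 * l\<^sup>2 * K\<^sup>2) / \<alpha> \<le> 0" by simp
    then show ?thesis using alpha_pos by (simp add: divide_le_0_iff)
  qed
  define l where "l = min (1 / (2 * K)) ((EV - 1) / (4 * K\<^sup>2))"
  have l0: "0 < l" using EV1 K1 by (simp add: l_def)
  have "l * (EV - 1) - 2 * l\<^sup>2 * K\<^sup>2 \<le> 0" using key[OF l0] by (simp add: l_def)
  then have "l * (EV - 1) \<le> l * (2 * l * K\<^sup>2)" by (simp add: power2_eq_square algebra_simps)
  then have "EV - 1 \<le> 2 * l * K\<^sup>2" using l0 by simp
  also have "\<dots> \<le> 2 * ((EV - 1) / (4 * K\<^sup>2)) * K\<^sup>2"
  proof -
    have "l \<le> (EV - 1) / (4 * K\<^sup>2)" by (simp add: l_def)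
    then have "2 * l \<le> 2 * ((EV - 1) / (4 * K\<^sup>2))" by linarith
    then show ?thesis by (rule mult_right_mono) simp
  qed
  also have "\<dots> = (EV - 1) / 2" using K1 by (simp add: field_simps)
  finally show False using EV1 by simp
qed

end


lemma poly_ln_ineq:
  fixes y :: real assumes y: "y \<ge> 2/9"
  shows "y - 1 - ln y / 10 \<le> 9/20 * (y\<^sup>2 - 1)"
proof -
  have y0: "y > 0" using y by simp
  have "ln (1/y) \<le> 1/y - 1" using y0 by (intro ln_le_minus_one) simp
  then have l: "- ln y \<le> 1/y - 1" using y0 by (simp add: ln_div)
  have fac: "9*y^3 - 20*y\<^sup>2 + 13*y - 2 = (y-1)\<^sup>2 * (9*y - 2)" by algebra
  have "(y-1)\<^sup>2 * (9*y - 2) \<ge> 0" using y by simp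
  then have p: "20*y\<^sup>2 - 22*y + 2 \<le> 9*y^3 - 9*y" using fac by linarith
  have "y - 1 + (1/y - 1)/10 \<le> 9/20 * (y\<^sup>2 - 1)"
  proof -
    have "(y - 1 + (1/y - 1)/10) * (20*y) = 20*y\<^sup>2 - 22*y + 2"
      using y0 by (simp add: field_simps power2_eq_square)
    also have "\<dots> \<le> 9*y^3 - 9*y" by (rule p)
    also have "\<dots> = (9/20 * (y\<^sup>2 - 1)) * (20*y)" by (simp add: field_simps power2_eq_square power3_eq_cube)
    finally show ?thesis using y0 by (simp add: mult_le_cancel_right)
  qed
  moreover have "ln y / 10 \<ge> - (1/y - 1)/10" using l by simp
  ultimately show ?thesis by linarith
qed

lemma exp_m1_ge: "exp (-1::real) \<ge> 2/9"
proof -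
  have h: "exp (-1/2::real) \<ge> 1/2" using exp_ge_add_one_self[of "-1/2::real"] by simp
  have "exp (-1::real) = exp (-1/2) * exp (-1/2)" by (simp flip: exp_add)
  also have "\<dots> \<ge> 1/2 * (1/2)" using h by (intro mult_mono) auto
  finally show ?thesis by simp
qed

context erm_setting begin

lemma central_eta:
  assumes w: "norm w \<le> R" and eta: "0 < \<eta>" "\<eta> \<le> \<alpha>"
  shows "(\<integral>z. exp (\<eta> * (lw ws z - lw w z)) \<partial>P) \<le> 1"
proof -
  define t where "t = \<eta> / \<alpha>"
  have t: "0 \<le> t" "t \<le> 1" using eta alpha_pos by (auto simp: t_def)
  have pw: "exp (\<eta> * x) \<le> (1 - t) + t * exp (\<alpha> * x)" for x
  proof -
    have "exp ((1 - t) *\<^sub>R 0 + t *\<^sub>R (\<alpha> * x)) \<le> (1 - t) * exp 0 + t * exp (\<alpha> * x)"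
      using convex_onD[OF exp_convex, of t 0 "\<alpha> * x"] t by simp
    moreover have "(1 - t) *\<^sub>R 0 + t *\<^sub>R (\<alpha> * x) = \<eta> * x" using alpha_pos by (simp add: t_def)
    ultimately show ?thesis by (metis exp_zero mult_1_right)
  qed
  have "(\<integral>z. exp (\<eta> * (lw ws z - lw w z)) \<partial>P)
      \<le> (\<integral>z. (1 - t) + t * exp (\<alpha> * (lw ws z - lw w z)) \<partial>P)"
    using expdiff_int[OF w] pw by (intro integral_mono) auto
  also have "\<dots> = (1 - t) + t * (\<integral>z. exp (\<alpha> * (lw ws z - lw w z)) \<partial>P)"
    using expdiff_int[OF w] by (simp add: prob_space)
  also have "\<dots> \<le> (1 - t) + t * 1"
    using central[OF w] t by (intro add_left_mono mult_left_mono) auto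
  finally show ?thesis by simp
qed

lemma half_bound:
  assumes w: "norm w \<le> R" and eta: "0 < \<eta>" "\<eta> \<le> \<alpha>" "\<eta> * (G * R) \<le> 1"
  shows "(\<integral>z. exp (\<eta> / 2 * (lw ws z - lw w z)) \<partial>P)
          \<le> 1 - \<eta> * (pop_risk P loss w - pop_risk P loss ws) / 20"
proof -
  have pw: "exp (\<eta> / 2 * (lw ws z - lw w z))
      \<le> 1 + \<eta> / 20 * (lw ws z - lw w z) + 9/20 * (exp (\<eta> * (lw ws z - lw w z)) - 1)"
    if z: "supp z" for z
  proof -
    define X where "X = lw ws z - lw w z"
    define Y where "Y = exp (\<eta> / 2 * X)"
    have "\<bar>X\<bar> \<le> 2 * G * R" using diff_bound[OF z w] by (simp add: X_def)
    then have "\<eta> * \<bar>X\<bar> \<le> \<eta> * (2 * G * R)" using eta by (intro mult_left_mono) auto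
    moreover have "\<eta> * X \<ge> - (\<eta> * \<bar>X\<bar>)" using eta by (simp add: abs_if)
    moreover have "\<eta> * (2 * G * R) = 2 * (\<eta> * (G * R))" by simp
    ultimately have "\<eta> * X \<ge> -2" using eta(3) by linarith
    then have "\<eta> / 2 * X \<ge> -1" by simp
    then have "Y \<ge> exp (-1)" by (simp add: Y_def)
    then have Y: "Y \<ge> 2/9" using exp_m1_ge by linarith
    have A0: "Y - 1 - ln Y / 10 \<le> 9/20 * (Y\<^sup>2 - 1)" by (rule poly_ln_ineq[OF Y])
    have lnY: "ln Y = \<eta> / 2 * X" by (simp add: Y_def)
    have Y2: "Y\<^sup>2 = exp (\<eta> * X)"
      by (simp add: Y_def power2_eq_square flip: exp_add)
    have A: "Y - 1 - (\<eta> / 2 * X) / 10 \<le> 9/20 * (exp (\<eta> * X) - 1)"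
      using A0 unfolding lnY Y2 .
    have "\<eta> / 20 * X = (\<eta> / 2 * X) / 10" by simp
    then have "Y \<le> 1 + \<eta> / 20 * X + 9/20 * (exp (\<eta> * X) - 1)" using A by linarith
    then show ?thesis by (simp only: X_def Y_def)
  qed
  have "(\<integral>z. exp (\<eta> / 2 * (lw ws z - lw w z)) \<partial>P)
      \<le> (\<integral>z. 1 + \<eta> / 20 * (lw ws z - lw w z) + 9/20 * (exp (\<eta> * (lw ws z - lw w z)) - 1) \<partial>P)"
  proof (rule integral_mono_AE)
    show "integrable P (\<lambda>z. exp (\<eta> / 2 * (lw ws z - lw w z)))" by (rule expdiff_int[OF w])
    show "integrable P (\<lambda>z. 1 + \<eta> / 20 * (lw ws z - lw w z) + 9/20 * (exp (\<eta> * (lw ws z - lw w z)) - 1))"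
      using expdiff_int[OF w] lw_int[OF w] lw_int[OF ws_feas] by auto
    show "AE z in P. exp (\<eta> / 2 * (lw ws z - lw w z))
        \<le> 1 + \<eta> / 20 * (lw ws z - lw w z) + 9/20 * (exp (\<eta> * (lw ws z - lw w z)) - 1)"
      using AE_supp by (rule AE_mp) (intro AE_I2 impI pw)
  qed
  also have "\<dots> = 1 + \<eta> / 20 * (pop_risk P loss ws - pop_risk P loss w)
                 + 9/20 * ((\<integral>z. exp (\<eta> * (lw ws z - lw w z)) \<partial>P) - 1)"
    using expdiff_int[OF w] lw_int[OF w] lw_int[OF ws_feas]
    by (simp add: pop_risk_lw prob_space Bochner_Integration.integral_add Bochner_Integration.integral_diff)
  also have "\<dots> \<le> 1 + \<eta> / 20 * (pop_risk P loss ws - pop_risk P loss w) + 9/20 * (1 - 1)"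
    using central_eta[OF w eta(1,2)] by (intro add_left_mono mult_left_mono) auto
  finally show ?thesis by (simp add: algebra_simps diff_divide_distrib)
qed

end


context erm_setting begin

lemma PP: "product_prob_space (\<lambda>_. P)"
  by (simp add: product_prob_space_def product_prob_space_axioms_def product_sigma_finite_def
      P_prob prob_space_imp_sigma_finite)

lemma PiM_prob: "prob_space (PiM I (\<lambda>_. P))"
  by (rule prob_space_PiM) (rule P_prob)

lemma tail_bound:
  assumes w: "norm w \<le> R" and eta: "0 < \<eta>" "\<eta> \<le> \<alpha>" "\<eta> * (G * R) \<le> 1"
  shows "measure (PiM {..<n} (\<lambda>_. P))
           {S \<in> space (PiM {..<n} (\<lambda>_. P)). - a \<le> (\<Sum>i<n. lw ws (S i) - lw w (S i))}
         \<le> exp (\<eta> / 2 * a - real n * (\<eta> * (pop_risk P loss w - pop_risk P loss ws) / 20))"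
proof -
  interpret PP: product_prob_space "\<lambda>_. P" "{..<n}" by (rule PP)
  define s where "s = \<eta> / 2"
  define x where "x = \<eta> * (pop_risk P loss w - pop_risk P loss ws) / 20"
  define f where "f z = exp (s * (lw ws z - lw w z))" for z
  define U where "U S = (\<Prod>i<n. f (S i))" for S :: "nat \<Rightarrow> 'a \<times> real"
  let ?M = "PiM {..<n} (\<lambda>_. P)"
  have s0: "s > 0" using eta by (simp add: s_def)
  have fmeas[measurable]: "f \<in> borel_measurable P" unfolding f_def by measurable
  have fint: "integrable P f" unfolding f_def by (rule expdiff_int[OF w])
  have Ef: "(\<integral>z. f z \<partial>P) \<le> 1 - x"
    unfolding f_def s_def x_def by (rule half_bound[OF w eta])
  have Ef0: "0 \<le> (\<integral>z. f z \<partial>P)" by (simp add: f_def)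
  have Uint: "integrable ?M U"
    unfolding U_def by (rule PP.product_integrable_prod) (auto simp: fint)
  have EU: "(\<integral>S. U S \<partial>?M) = (\<integral>z. f z \<partial>P) ^ n"
    unfolding U_def by (subst PP.product_integral_prod) (auto simp: fint)
  have Ueq: "U S = exp (s * (\<Sum>i<n. lw ws (S i) - lw w (S i)))" for S
    by (simp add: U_def f_def exp_sum sum_distrib_left)
  have set_eq: "{S \<in> space ?M. - a \<le> (\<Sum>i<n. lw ws (S i) - lw w (S i))}
      = {S \<in> space ?M. exp (- s * a) \<le> U S}"
  proof -
    have "(- (s * a) \<le> s * y) = (- a \<le> y)" for y
      using s0 by (metis mult_le_cancel_left_pos mult_minus_right)
    then show ?thesis by (auto simp: Ueq)
  qed
  have "measure ?M {S \<in> space ?M. exp (- s * a) \<le> U S} \<le> (\<integral>S. U S \<partial>?M) / exp (- s * a)"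
    by (rule integral_Markov_inequality_measure[OF Uint, where A="space ?M"])
       (auto simp: U_def f_def intro!: prod_nonneg)
  also have "\<dots> = exp (s * a) * (\<integral>z. f z \<partial>P) ^ n" by (simp add: EU exp_minus field_simps)
  also have "\<dots> \<le> exp (s * a) * exp (- x) ^ n"
  proof -
    have "(\<integral>z. f z \<partial>P) \<le> exp (- x)" using Ef exp_ge_add_one_self[of "- x"] by linarith
    then show ?thesis using Ef0 by (intro mult_left_mono power_mono) auto
  qed
  also have "\<dots> = exp (s * a - real n * x)"
    by (simp add: exp_diff exp_minus power_divide field_simps flip: exp_of_nat_mult)
  finally show ?thesis using set_eq by (simp add: s_def x_def)
qed

end


lemma grid_approx:
  fixes w :: "'a::euclidean_space"
  assumes R: "R > 0" and n: "n \<ge> 1" and w: "norm w \<le> R"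
  shows "\<exists>k \<in> (\<Pi>\<^sub>E b\<in>Basis. {- int n..int n}).
           norm (w - (\<Sum>b\<in>Basis. (R / real n * of_int (k b)) *\<^sub>R b)) \<le> real DIM('a) * R / real n"
proof -
  define h where "h = R / real n"
  have h0: "h > 0" using R n by (simp add: h_def)
  define k where "k b = (if b \<in> Basis then round ((w \<bullet> b) / h) else undefined)" for b
  have kb: "k b \<in> {- int n..int n} \<and> \<bar>w \<bullet> b - h * of_int (k b)\<bar> \<le> h" if b: "b \<in> Basis" for b
  proof -
    have wb: "\<bar>w \<bullet> b\<bar> \<le> R" using Basis_le_norm[OF b, of w] w by linarith
    have "\<bar>(w \<bullet> b) / h\<bar> = \<bar>w \<bullet> b\<bar> / h" using h0 by simp
    also have "\<dots> \<le> R / h" using wb h0 by (intro divide_right_mono) auto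
    also have "R / h = real n" using R n by (simp add: h_def)
    finally have "\<bar>(w \<bullet> b) / h\<bar> \<le> real n" .
    moreover have "(w \<bullet> b) / h \<le> \<bar>(w \<bullet> b) / h\<bar>" "- ((w \<bullet> b) / h) \<le> \<bar>(w \<bullet> b) / h\<bar>"
      by (rule abs_ge_self, rule abs_ge_minus_self)
    ultimately have x: "- real n \<le> (w \<bullet> b) / h" "(w \<bullet> b) / h \<le> real n" by linarith+
    have r: "\<bar>of_int (k b) - (w \<bullet> b) / h\<bar> \<le> 1/2"
      using of_int_round_abs_le[of "(w \<bullet> b) / h"] b by (simp add: k_def)
    have "of_int (k b) \<le> real n + 1/2" "of_int (k b) \<ge> - real n - 1/2" using r x by linarith+
    then have "k b \<le> int n" "k b \<ge> - int n" by linarith+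
    moreover have "\<bar>w \<bullet> b - h * of_int (k b)\<bar> = h * \<bar>of_int (k b) - (w \<bullet> b) / h\<bar>"
      using h0 by (simp add: field_simps abs_mult_pos' abs_minus_commute)
    moreover have "h * \<bar>of_int (k b) - (w \<bullet> b) / h\<bar> \<le> h * 1"
      using r h0 by (intro mult_left_mono) auto
    ultimately show ?thesis by auto
  qed
  have kin: "k \<in> (\<Pi>\<^sub>E b\<in>Basis. {- int n..int n})" using kb by (auto simp: k_def)
  define g where "g = (\<Sum>b\<in>Basis. (h * of_int (k b)) *\<^sub>R b)"
  have gb: "(w - g) \<bullet> b = w \<bullet> b - h * of_int (k b)" if "b \<in> Basis" for b
    using that by (simp add: g_def inner_diff_left inner_sum_left inner_Basis if_distrib cong: if_cong)
  have "norm (w - g) \<le> (\<Sum>b\<in>Basis. \<bar>(w - g) \<bullet> b\<bar>)" by (rule norm_le_l1)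
  also have "\<dots> \<le> (\<Sum>b\<in>(Basis::'a set). h)" using kb gb by (intro sum_mono) auto
  also have "\<dots> = real DIM('a) * R / real n" by (simp add: h_def)
  finally show ?thesis using kin by (auto simp: g_def h_def)
qed

lemma net_exists:
  assumes R: "R > 0" and n: "n \<ge> 1"
  shows "\<exists>N :: 'a::euclidean_space set. finite N \<and> (\<forall>v\<in>N. norm v \<le> R)
      \<and> card N \<le> (2 * n + 1) ^ DIM('a)
      \<and> (\<forall>w. norm w \<le> R \<longrightarrow> (\<exists>v\<in>N. norm (w - v) \<le> 2 * real DIM('a) * R / real n))"
proof -
  define e where "e = real DIM('a) * R / real n"
  define gf where "gf k = (\<Sum>b\<in>Basis. (R / real n * of_int (k b)) *\<^sub>R b)" for k :: "'a \<Rightarrow> int"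
  define Gr where "Gr = gf ` (\<Pi>\<^sub>E b\<in>Basis. {- int n..int n})"
  define Gr' where "Gr' = {g \<in> Gr. \<exists>v::'a. norm v \<le> R \<and> norm (v - g) \<le> e}"
  define pick where "pick g = (SOME v::'a. norm v \<le> R \<and> norm (v - g) \<le> e)" for g
  define N where "N = pick ` Gr'"
  have finPi: "finite (\<Pi>\<^sub>E b\<in>(Basis::'a set). {- int n..int n})" by (intro finite_PiE) auto
  have cardPi: "card (\<Pi>\<^sub>E b\<in>(Basis::'a set). {- int n..int n}) = (2 * n + 1) ^ DIM('a)"
  proof -
    have "2 * int n + 1 = int (Suc (2 * n))" by simp
    then have e: "nat (2 * int n + 1) = Suc (2 * n)" by (simp only: nat_int)
    show ?thesis by (simp add: card_PiE e)
  qed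
  have finGr: "finite Gr" using finPi by (simp add: Gr_def)
  have "card N \<le> card Gr'" unfolding N_def by (rule card_image_le) (use finGr in \<open>simp add: Gr'_def\<close>)
  also have "\<dots> \<le> card Gr" using finGr by (intro card_mono) (auto simp: Gr'_def)
  also have "\<dots> \<le> card (\<Pi>\<^sub>E b\<in>(Basis::'a set). {- int n..int n})"
    unfolding Gr_def by (rule card_image_le[OF finPi])
  finally have cN: "card N \<le> (2 * n + 1) ^ DIM('a)" using cardPi by simp
  have finN: "finite N" using finGr by (simp add: N_def Gr'_def)
  have pick: "norm (pick g) \<le> R \<and> norm (pick g - g) \<le> e" if "g \<in> Gr'" for g
    unfolding pick_def by (rule someI_ex) (use that in \<open>auto simp: Gr'_def\<close>)
  have inR: "\<forall>v\<in>N. norm v \<le> R" using pick by (auto simp: N_def)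
  have cov: "\<exists>v\<in>N. norm (w - v) \<le> 2 * real DIM('a) * R / real n" if w: "norm w \<le> R" for w
  proof -
    obtain k where k: "k \<in> (\<Pi>\<^sub>E b\<in>Basis. {- int n..int n})" and kw: "norm (w - gf k) \<le> e"
      using grid_approx[OF R n w] by (auto simp: gf_def e_def)
    have g: "gf k \<in> Gr'" using k kw w by (auto simp: Gr'_def Gr_def)
    have "norm (w - pick (gf k)) \<le> norm (w - gf k) + norm (pick (gf k) - gf k)"
      using norm_triangle_ineq4[of "w - gf k" "pick (gf k) - gf k"] by simp
    also have "\<dots> \<le> e + e" using kw pick[OF g] by linarith
    also have "e + e = 2 * real DIM('a) * R / real n" by (simp add: e_def)
    finally have "norm (w - pick (gf k)) \<le> 2 * real DIM('a) * R / real n" .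
    moreover have "pick (gf k) \<in> N" using g by (simp add: N_def)
    ultimately show ?thesis by blast
  qed
  show ?thesis using finN inR cN cov by blast
qed



context erm_setting begin

lemma supp_pred[measurable]: "Measurable.pred P supp"
proof -
  have [measurable]: "(\<lambda>z::'a\<times>real. norm (fst z)) \<in> borel_measurable borel"
    by (intro borel_measurable_continuous_onI continuous_intros)
  have [measurable]: "(\<lambda>z::'a\<times>real. \<bar>snd z\<bar>) \<in> borel_measurable borel"
    by (intro borel_measurable_continuous_onI continuous_intros)
  have "Measurable.pred borel supp" unfolding supp_def by measurable
  then show ?thesis by (simp only: measurable_cong_sets[OF P_sets refl])
qed

lemma excess_trivial:
  assumes "norm w \<le> R"
  shows "pop_risk P loss w - pop_risk P loss ws \<le> 2 * G * R"
proof -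
  have "pop_risk P loss w - pop_risk P loss ws \<le> G * norm (w - ws)"
    using pop_lip[OF assms ws_feas] by linarith
  also have "\<dots> \<le> G * (2 * R)"
    using norm_triangle_ineq4[of w ws] assms ws_feas G_pos by (intro mult_left_mono) auto
  finally show ?thesis by simp
qed

lemma degenerate:
  assumes th: "\<theta> > G\<^sup>2"
    and aI: "\<And>v. weighted_second_moment_form P (\<lambda>z. (loss' (snd z * (ws \<bullet> fst z)))\<^sup>2) v
               \<ge> \<theta> * weighted_second_moment_form P (\<lambda>z. 1) v"
  shows "pop_risk P loss w = loss 0"
proof -
  define q :: "'a \<times> real \<Rightarrow> real" where "q z = (w \<bullet> fst z)\<^sup>2" for z
  have qmeas[measurable]: "q \<in> borel_measurable P"
  proof -
    have "q \<in> borel_measurable borel" unfolding q_def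
      by (intro borel_measurable_continuous_onI continuous_intros)
    then show ?thesis by (simp only: measurable_cong_sets[OF P_sets refl])
  qed
  have qint: "integrable P q"
  proof (rule integrable_const_bound[where B="(norm w)\<^sup>2"])
    show "AE z in P. norm (q z) \<le> (norm w)\<^sup>2"
      using AE_supp
    proof (rule AE_mp, intro AE_I2 impI)
      fix z assume z: "supp z"
      have "\<bar>w \<bullet> fst z\<bar> \<le> norm w * norm (fst z)" by (rule Cauchy_Schwarz_ineq2)
      also have "\<dots> \<le> norm w * 1" using z by (intro mult_left_mono) (auto simp: supp_def)
      finally have "\<bar>w \<bullet> fst z\<bar> \<le> norm w" by simp
      then have "\<bar>w \<bullet> fst z\<bar>\<^sup>2 \<le> (norm w)\<^sup>2" by (intro power_mono) auto
      then show "norm (q z) \<le> (norm w)\<^sup>2" by (simp add: q_def)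
    qed
  qed measurable
  have q0: "0 \<le> (\<integral>z. q z \<partial>P)" by (simp add: q_def)
  define f where "f z = (loss' (snd z * (ws \<bullet> fst z)))\<^sup>2 * q z" for z
  have fle: "AE z in P. f z \<le> G\<^sup>2 * q z"
    using AE_supp
  proof (rule AE_mp, intro AE_I2 impI)
    fix z assume z: "supp z"
    have "\<bar>loss' (snd z * (ws \<bullet> fst z))\<bar> \<le> G"
      by (rule loss_lipschitz) (rule supp_inner[OF z ws_feas])
    then have "(loss' (snd z * (ws \<bullet> fst z)))\<^sup>2 \<le> G\<^sup>2"
      by (metis abs_ge_zero power2_abs power_mono)
    then show "f z \<le> G\<^sup>2 * q z" unfolding f_def by (intro mult_right_mono) (auto simp: q_def)
  qed
  have If: "(\<integral>z. f z \<partial>P) \<le> G\<^sup>2 * (\<integral>z. q z \<partial>P)"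
  proof (cases "integrable P f")
    case True
    have "(\<integral>z. f z \<partial>P) \<le> (\<integral>z. G\<^sup>2 * q z \<partial>P)"
      using True qint fle by (intro integral_mono_AE) auto
    then show ?thesis by simp
  next
    case False
    then show ?thesis using q0 by (simp add: not_integrable_integral_eq)
  qed
  have "\<theta> * (\<integral>z. q z \<partial>P) \<le> (\<integral>z. f z \<partial>P)"
    using aI[of w] by (simp add: weighted_second_moment_form_def f_def q_def)
  then have "\<theta> * (\<integral>z. q z \<partial>P) \<le> G\<^sup>2 * (\<integral>z. q z \<partial>P)" using If by linarith
  then have "(\<integral>z. q z \<partial>P) = 0" using th q0
    by (metis less_le mult_le_cancel_right not_le)
  moreover have nn: "AE z in P. 0 \<le> q z" by (simp add: q_def)
  ultimately have "AE z in P. q z = 0"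
    using integral_nonneg_eq_0_iff_AE[OF qint nn] by blast
  then have "AE z in P. lw w z = loss 0"
    by (rule AE_mp) (auto simp: q_def lw_def)
  then have "(\<integral>z. lw w z \<partial>P) = (\<integral>z. loss 0 \<partial>P)" by (intro integral_cong_AE) auto
  then show ?thesis by (simp add: pop_risk_lw prob_space)
qed

end


context erm_setting begin

lemma main_good:
  assumes n2: "n \<ge> 2" and t: "t > 0" and eta_def: "\<eta> = min \<alpha> (1 / (G * R))"
  shows "\<exists>E \<in> sets (PiM {..<n} (\<lambda>_. P)).
           measure (PiM {..<n} (\<lambda>_. P)) E \<ge> 1 - exp (- t) \<and>
           (\<forall>S \<in> E. \<forall>w_hat. norm w_hat \<le> R \<longrightarrow>
              (\<forall>w. norm w \<le> R \<longrightarrow> emp_risk n S loss w_hat \<le> emp_risk n S loss w) \<longrightarrow>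
              pop_risk P loss w_hat - pop_risk P loss ws
                \<le> 20 * (t + real DIM('a) * ln (2 * real n + 1)) / (real n * \<eta>)
                   + 22 * G * R * real DIM('a) / real n)"
proof -
  let ?M = "PiM {..<n} (\<lambda>_. P)"
  interpret Q: prob_space ?M by (rule PiM_prob)
  have GR: "G * R > 0" using G_pos R_pos by simp
  have eta0: "\<eta> > 0" using alpha_pos GR by (simp add: eta_def)
  have etaa: "\<eta> \<le> \<alpha>" by (simp add: eta_def)
  have etaGR: "\<eta> * (G * R) \<le> 1"
  proof -
    have "\<eta> \<le> 1 / (G * R)" by (simp add: eta_def)
    then have "\<eta> * (G * R) \<le> 1 / (G * R) * (G * R)" using GR by (intro mult_right_mono) auto
    then show ?thesis using G_pos R_pos by simp
  qed
  have n1: "n \<ge> 1" using n2 by simp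
  have npos: "real n > 0" using n2 by simp
  define \<epsilon> where "\<epsilon> = 2 * real DIM('a) * R / real n"
  obtain N :: "'a set" where finN: "finite N" and NR: "\<forall>v\<in>N. norm v \<le> R"
    and cardN: "card N \<le> (2 * n + 1) ^ DIM('a)"
    and cov: "\<forall>w. norm w \<le> R \<longrightarrow> (\<exists>v\<in>N. norm (w - v) \<le> \<epsilon>)"
    using net_exists[OF R_pos n1, where 'a='a] unfolding \<epsilon>_def by blast
  define cN where "cN = real (card N)"
  have "N \<noteq> {}" using cov ws_feas by blast
  then have cN1: "cN \<ge> 1" using finN by (simp add: cN_def Suc_le_eq card_gt_0_iff)
  have lncN: "ln cN \<le> real DIM('a) * ln (2 * real n + 1)"
  proof -
    have "cN \<le> real ((2 * n + 1) ^ DIM('a))" unfolding cN_def using cardN by (simp only: of_nat_le_iff)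
    also have "real ((2 * n + 1) ^ DIM('a)) = (2 * real n + 1) ^ DIM('a)" by (simp add: add.commute)
    finally have "cN \<le> (2 * real n + 1) ^ DIM('a)" .
    then have "ln cN \<le> ln ((2 * real n + 1) ^ DIM('a))" using cN1 by simp
    also have "\<dots> = real DIM('a) * ln (2 * real n + 1)" by (simp add: ln_realpow)
    finally show ?thesis .
  qed
  define a where "a = real n * G * \<epsilon>"
  define \<tau> where "\<tau> = 20 * (t + ln cN) / (real n * \<eta>) + 10 * G * \<epsilon>"
  define B where "B v = {S \<in> space ?M. - a \<le> (\<Sum>i<n. lw ws (S i) - lw v (S i))}" for v
  define Nb where "Nb = {v \<in> N. pop_risk P loss v - pop_risk P loss ws > \<tau>}"
  define Good where "Good = {S \<in> space ?M. \<forall>i\<in>{..<n}. supp (S i)}"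
  define U where "U = (\<Union>v\<in>Nb. B v)"
  define E where "E = Good - U"
  have finNb: "finite Nb" using finN by (simp add: Nb_def)
  have Bsets: "B v \<in> sets ?M" for v unfolding B_def by measurable
  have Goodsets: "Good \<in> sets ?M" unfolding Good_def by measurable
  have Usets: "U \<in> sets ?M" unfolding U_def using finNb Bsets by (intro sets.finite_UN) auto
  have Esets: "E \<in> sets ?M" unfolding E_def using Goodsets Usets by auto
  have Bbound: "measure ?M (B v) \<le> exp (- t) / cN" if v: "v \<in> Nb" for v
  proof -
    have vR: "norm v \<le> R" using v NR by (auto simp: Nb_def)
    define \<Delta> where "\<Delta> = pop_risk P loss v - pop_risk P loss ws"
    have D: "\<Delta> > \<tau>" using v by (simp add: Nb_def \<Delta>_def)
    have "measure ?M (B v) \<le> exp (\<eta> / 2 * a - real n * (\<eta> * \<Delta> / 20))"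
      unfolding B_def \<Delta>_def by (rule tail_bound[OF vR eta0 etaa etaGR])
    also have "\<dots> \<le> exp (- (t + ln cN))"
    proof -
      have "real n * (\<eta> * \<tau> / 20) = (t + ln cN) + \<eta> / 2 * a"
        using npos eta0 by (simp add: \<tau>_def a_def field_simps)
      moreover have "real n * (\<eta> * \<tau> / 20) \<le> real n * (\<eta> * \<Delta> / 20)"
        using D npos eta0 by (intro mult_left_mono) auto
      ultimately show ?thesis by simp
    qed
    also have "\<dots> = exp (- t) / cN" using cN1 by (simp add: exp_diff exp_minus field_simps)
    finally show ?thesis .
  qed
  have Ubound: "measure ?M U \<le> exp (- t)"
  proof -
    have "measure ?M U \<le> (\<Sum>v\<in>Nb. measure ?M (B v))"
      unfolding U_def by (rule measure_UNION_le[OF finNb Bsets])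
    also have "\<dots> \<le> (\<Sum>v\<in>Nb. exp (- t) / cN)" using Bbound by (rule sum_mono)
    also have "\<dots> = real (card Nb) * (exp (- t) / cN)" by simp
    also have "\<dots> \<le> cN * (exp (- t) / cN)"
    proof -
      have "card Nb \<le> card N" using finN by (intro card_mono) (auto simp: Nb_def)
      then show ?thesis by (intro mult_right_mono) (auto simp: cN_def)
    qed
    also have "\<dots> = exp (- t)" using cN1 by simp
    finally show ?thesis .
  qed
  have AEgood: "AE S in ?M. \<forall>i\<in>{..<n}. supp (S i)"
    by (intro eventually_ball_finite ballI AE_PiM_component P_prob AE_supp) auto
  have "measure ?M E = measure ?M (space ?M - U)"
  proof (rule Q.finite_measure_eq_AE)
    show "AE x in ?M. (x \<in> E) = (x \<in> space ?M - U)"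
      using AEgood by (rule AE_mp) (auto simp: E_def Good_def intro!: AE_I2)
    show "E \<in> sets ?M" by (rule Esets)
    show "space ?M - U \<in> sets ?M" using Usets by auto
  qed
  also have "\<dots> = 1 - measure ?M U" by (rule Q.prob_compl[OF Usets])
  finally have mE: "measure ?M E \<ge> 1 - exp (- t)" using Ubound by linarith
  have bound: "pop_risk P loss w_hat - pop_risk P loss ws
      \<le> 20 * (t + real DIM('a) * ln (2 * real n + 1)) / (real n * \<eta>) + 22 * G * R * real DIM('a) / real n"
    if S: "S \<in> E" and wh: "norm w_hat \<le> R"
      and erm: "\<forall>w. norm w \<le> R \<longrightarrow> emp_risk n S loss w_hat \<le> emp_risk n S loss w" for S w_hat
  proof -
    have Sspace: "S \<in> space ?M" and Ssupp: "\<And>i. i < n \<Longrightarrow> supp (S i)" and SU: "S \<notin> U"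
      using S by (auto simp: E_def Good_def)
    obtain v where vN: "v \<in> N" and vw: "norm (w_hat - v) \<le> \<epsilon>" using cov wh by blast
    have vR: "norm v \<le> R" using vN NR by auto
    have "emp_risk n S loss w_hat \<le> emp_risk n S loss ws" using erm ws_feas by blast
    then have s1: "(\<Sum>i<n. lw w_hat (S i)) \<le> (\<Sum>i<n. lw ws (S i))"
      using npos by (simp add: emp_risk_def lw_def divide_right_mono_neg divide_le_cancel)
    have s2: "(\<Sum>i<n. lw v (S i)) \<le> (\<Sum>i<n. lw w_hat (S i) + G * \<epsilon>)"
    proof (rule sum_mono)
      fix i assume "i \<in> {..<n}"
      then have "supp (S i)" using Ssupp by simp
      then have "\<bar>lw v (S i) - lw w_hat (S i)\<bar> \<le> G * norm (v - w_hat)" by (rule lw_lip[OF _ vR wh])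
      also have "\<dots> \<le> G * \<epsilon>" using vw G_pos by (intro mult_left_mono) (auto simp: norm_minus_commute)
      finally show "lw v (S i) \<le> lw w_hat (S i) + G * \<epsilon>" by linarith
    qed
    have "(\<Sum>i<n. lw w_hat (S i) + G * \<epsilon>) = (\<Sum>i<n. lw w_hat (S i)) + a"
      by (simp add: sum.distrib a_def)
    then have "- a \<le> (\<Sum>i<n. lw ws (S i) - lw v (S i))"
      using s1 s2 by (simp add: sum_subtractf)
    then have "S \<in> B v" using Sspace by (simp add: B_def)
    then have "v \<notin> Nb" using SU by (auto simp: U_def)
    then have Dv: "pop_risk P loss v - pop_risk P loss ws \<le> \<tau>" using vN by (auto simp: Nb_def)
    have "pop_risk P loss w_hat - pop_risk P loss v \<le> G * norm (w_hat - v)"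
      using pop_lip[OF wh vR] by linarith
    also have "\<dots> \<le> G * \<epsilon>" using vw G_pos by (intro mult_left_mono) auto
    finally have "pop_risk P loss w_hat - pop_risk P loss ws \<le> \<tau> + G * \<epsilon>" using Dv by linarith
    also have "\<tau> + G * \<epsilon> = 20 * (t + ln cN) / (real n * \<eta>) + 22 * G * R * real DIM('a) / real n"
      by (simp add: \<tau>_def \<epsilon>_def field_simps)
    also have "\<dots> \<le> 20 * (t + real DIM('a) * ln (2 * real n + 1)) / (real n * \<eta>) + 22 * G * R * real DIM('a) / real n"
      using lncN npos eta0 by (intro add_right_mono divide_right_mono) auto
    finally show ?thesis .
  qed
  show ?thesis using Esets mE bound by blast
qed

end


lemma ln_n_half: "n \<ge> 2 \<Longrightarrow> ln (real n) \<ge> 1/2"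
proof -
  assume n: "n \<ge> 2"
  have "ln (1 / real n) \<le> 1 / real n - 1" using n by (intro ln_le_minus_one) auto
  then have "ln (real n) \<ge> 1 - 1 / real n" using n by (simp add: ln_div)
  moreover have "1 / real n \<le> 1/2" using n by (simp add: field_simps)
  ultimately show ?thesis by linarith
qed

lemma ln_2n1: "n \<ge> 2 \<Longrightarrow> ln (2 * real n + 1) \<le> 3 * ln (real n)"
proof -
  assume n: "n \<ge> 2"
  have "2 * real n + 1 \<le> real n ^ 3"
  proof -
    have "real n * real n \<ge> 2 * 2" using n by (intro mult_mono) auto
    then have "real n ^ 3 \<ge> 4 * real n" using n by (simp add: power3_eq_cube mult_right_mono)
    then show ?thesis using n by linarith
  qed
  then have "ln (2 * real n + 1) \<le> ln (real n ^ 3)" using n by simp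
  also have "\<dots> = 3 * ln (real n)" using n by (simp add: ln_realpow)
  finally show ?thesis .
qed

lemma final_arith:
  fixes G R \<alpha> \<theta> t \<eta> \<gamma> \<rho> :: real and n d :: nat
  assumes G: "G > 0" and R: "R > 0" and a: "\<alpha> > 0" and th: "\<theta> > 0" "\<theta> \<le> G\<^sup>2"
    and t: "t > 0" and n: "n \<ge> 2"
    and eta: "\<eta> = min \<alpha> (1 / (G * R))"
    and gam: "\<gamma> = max 1 (max (G\<^sup>2 / \<theta>) (G / (\<alpha> * \<theta> * R)))"
    and rho: "\<rho> \<ge> 32 * \<gamma>"
  shows "20 * (t + real d * ln (2 * real n + 1)) / (real n * \<eta>) + 22 * G * R * real d / real n
         \<le> (G * R * (32 * \<rho> + 28) + 3) * (t + 2 + real d * ln (real n)) / real n"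
proof -
  define K where "K = G * R * \<gamma>"
  have GR: "G * R > 0" using G R by simp
  have g1: "\<gamma> \<ge> 1" by (simp add: gam)
  have g2: "\<gamma> \<ge> G / (\<alpha> * \<theta> * R)" by (simp add: gam)
  have K0: "K \<ge> G * R" unfolding K_def using GR g1 by (metis mult_le_cancel_left1 less_le_not_le mult.commute nle_le)
  have Kalpha: "1 / \<alpha> \<le> K"
  proof -
    have "G * R * (G / (\<alpha> * \<theta> * R)) \<le> K" unfolding K_def using GR g2 by (intro mult_left_mono) auto
    moreover have "G * R * (G / (\<alpha> * \<theta> * R)) = G\<^sup>2 / (\<alpha> * \<theta>)"
      using R by (simp add: power2_eq_square field_simps)
    moreover have "1 / \<alpha> \<le> G\<^sup>2 / (\<alpha> * \<theta>)"
      using th a by (simp add: field_simps)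
    ultimately show ?thesis by linarith
  qed
  have inv_eta: "1 / \<eta> \<le> 2 * K"
  proof (cases "\<alpha> \<le> 1 / (G * R)")
    case True
    then have "\<eta> = \<alpha>" by (simp add: eta)
    then show ?thesis using Kalpha K0 GR by simp
  next
    case False
    then have "\<eta> = 1 / (G * R)" by (simp add: eta)
    then show ?thesis using K0 GR Kalpha a by (simp add: field_simps)
  qed
  have eta0: "\<eta> > 0" using a GR by (simp add: eta)
  have ln1: "ln (real n) \<ge> 1/2" by (rule ln_n_half[OF n])
  have ln2: "ln (2 * real n + 1) \<le> 3 * ln (real n)" by (rule ln_2n1[OF n])
  define X where "X = t + 2 + real d * ln (real n)"
  have dln: "real d \<le> 2 * (real d * ln (real n))"
  proof -
    have "real d * 1 \<le> real d * (2 * ln (real n))" using ln1 by (intro mult_left_mono) auto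
    then show ?thesis by (simp add: algebra_simps)
  qed
  have dl0: "real d * ln (real n) \<ge> 0" using ln1 by simp
  have X0: "X \<ge> 0" using t dl0 by (simp add: X_def)
  have T1: "t + real d * ln (2 * real n + 1) \<le> 3 * X"
  proof -
    have "real d * ln (2 * real n + 1) \<le> real d * (3 * ln (real n))" using ln2 by (intro mult_left_mono) auto
    moreover have "real d * (3 * ln (real n)) = 3 * (real d * ln (real n))" by simp
    ultimately have A: "real d * ln (2 * real n + 1) \<le> 3 * (real d * ln (real n))" by simp
    have gen: "t + A' \<le> 3 * (t + 2 + B')" if "A' \<le> 3 * B'" for A' B' :: real using that t by (simp add: distrib_left)
    show ?thesis unfolding X_def by (rule gen[OF A])
  qed
  have "20 * (t + real d * ln (2 * real n + 1)) / \<eta> = 20 * (t + real d * ln (2 * real n + 1)) * (1 / \<eta>)"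
    by simp
  also have "\<dots> \<le> 20 * (3 * X) * (2 * K)"
    using T1 inv_eta t eta0 X0 by (intro mult_mono) (auto intro!: add_nonneg_nonneg)
  finally have P1: "20 * (t + real d * ln (2 * real n + 1)) / \<eta> \<le> 120 * K * X" by (simp add: mult.commute mult.left_commute)
  have P2: "22 * G * R * real d \<le> 44 * K * X"
  proof -
    have "real d \<le> 2 * X" using dln t unfolding X_def distrib_left by linarith
    then have "G * R * real d \<le> K * (2 * X)" using K0 GR by (intro mult_mono) (auto simp: X_def)
    then show ?thesis by simp
  qed
  have C: "G * R * (32 * \<rho> + 28) + 3 \<ge> 164 * K"
  proof -
    have "G * R * (32 * \<rho>) \<ge> G * R * (32 * (32 * \<gamma>))" using rho GR by (intro mult_left_mono) auto
    moreover have "G * R * (32 * (32 * \<gamma>)) = 1024 * K" by (simp add: K_def)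
    moreover have "G * R * (32 * \<rho> + 28) + 3 = G * R * (32 * \<rho>) + (28 * (G * R) + 3)"
      by (simp add: algebra_simps)
    moreover have "K \<ge> 0" using K0 GR by linarith
    ultimately show ?thesis using GR by linarith
  qed
  have "20 * (t + real d * ln (2 * real n + 1)) / (real n * \<eta>) + 22 * G * R * real d / real n
      = (20 * (t + real d * ln (2 * real n + 1)) / \<eta> + 22 * G * R * real d) / real n"
    using n eta0 by (simp add: field_simps)
  also have "\<dots> \<le> (164 * K * X) / real n" using P1 P2 n by (intro divide_right_mono) auto
  also have "\<dots> \<le> ((G * R * (32 * \<rho> + 28) + 3) * X) / real n"
    using C X0 n by (intro divide_right_mono mult_right_mono) auto
  finally show ?thesis by (simp add: X_def)
qed



theorem theorem1:
  fixes P :: "('a::euclidean_space \<times> real) measure"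
    and loss loss' :: "real \<Rightarrow> real"
    and R G \<alpha> \<theta> t :: real
    and n :: nat
    and w_star :: 'a
  assumes P_prob: "prob_space P"
    and P_sets: "sets P = sets borel"
    and P_support: "AE z in P. norm (fst z) \<le> 1 \<and> \<bar>snd z\<bar> \<le> 1"
    and R_pos: "R > 0" and G_pos: "G > 0" and alpha_pos: "\<alpha> > 0" and theta_pos: "\<theta> > 0"
    and loss_nonneg: "\<And>z. loss z \<ge> 0"
    and loss_convex: "convex_on UNIV loss"
    and loss_deriv: "\<And>z. \<bar>z\<bar> \<le> R \<Longrightarrow> (loss has_real_derivative loss' z) (at z)"
    and loss_exp_concave: "concave_on {-R..R} (\<lambda>z. exp (- \<alpha> * loss z))"
    and loss_lipschitz: "\<And>z. \<bar>z\<bar> \<le> R \<Longrightarrow> \<bar>loss' z\<bar> \<le> G"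
    and w_star_feasible: "norm w_star \<le> R"
    and w_star_min: "\<And>w. norm w \<le> R \<Longrightarrow> pop_risk P loss w_star \<le> pop_risk P loss w"
    and assumption_I: "\<And>v. weighted_second_moment_form P
                 (\<lambda>z. (loss' (snd z * (w_star \<bullet> fst z)))\<^sup>2) v
               \<ge> \<theta> * weighted_second_moment_form P (\<lambda>z. 1) v"
    and n_pos: "n \<ge> 1"
    and t_pos: "t > 0"
  shows "let \<gamma> = max 1 (max (G\<^sup>2 / \<theta>) (G / (\<alpha> * \<theta> * R)));
             \<rho>\<^sub>0 = max (32 * \<gamma>) (sqrt (\<gamma> * (28 + 3 / (G * R))));
             m = \<lceil>log 2 (real n)\<rceil>
         in \<exists>E \<in> sets (PiM {..<n} (\<lambda>_. P)).
              measure (PiM {..<n} (\<lambda>_. P)) E \<ge> 1 - 2 * real_of_int m * exp (- t) \<and>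
              (\<forall>S \<in> E. \<forall>w_hat. norm w_hat \<le> R \<longrightarrow>
                 (\<forall>w. norm w \<le> R \<longrightarrow> emp_risk n S loss w_hat \<le> emp_risk n S loss w) \<longrightarrow>
                 pop_risk P loss w_hat - pop_risk P loss w_star
                   \<le> (G * R * (32 * \<rho>\<^sub>0 + 28) + 3) * (t + 2 + real DIM('a) * ln (real n)) / real n)"
proof -
  interpret erm_setting P loss loss' R G \<alpha> w_star
    by (rule erm_setting.intro[OF P_prob P_sets P_support R_pos G_pos alpha_pos loss_convex loss_deriv
        loss_exp_concave loss_lipschitz w_star_feasible w_star_min])
  let ?M = "PiM {..<n} (\<lambda>_. P)"
  interpret Q: prob_space ?M by (rule PiM_prob)
  define \<gamma> where "\<gamma> = max 1 (max (G\<^sup>2 / \<theta>) (G / (\<alpha> * \<theta> * R)))"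
  define \<rho> where "\<rho> = max (32 * \<gamma>) (sqrt (\<gamma> * (28 + 3 / (G * R))))"
  define m where "m = \<lceil>log 2 (real n)\<rceil>"
  define C where "C = G * R * (32 * \<rho> + 28) + 3"
  define X where "X = t + 2 + real DIM('a) * ln (real n)"
  have GR: "G * R > 0" using G_pos R_pos by simp
  have g1: "\<gamma> \<ge> 1" by (simp add: \<gamma>_def)
  have rho: "\<rho> \<ge> 32 * \<gamma>" by (simp add: \<rho>_def)
  have C28: "C \<ge> 28 * (G * R)"
  proof -
    have "G * R * (32 * \<rho>) \<ge> 0" using rho g1 GR by simp
    then show ?thesis by (simp add: C_def algebra_simps)
  qed
  have C0: "C \<ge> 0" using C28 GR by linarith
  have npos: "real n > 0" using n_pos by simp
  have X0: "X \<ge> 0" using t_pos n_pos by (simp add: X_def)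
  have RHS0: "C * X / real n \<ge> 0" using C0 X0 npos by simp
  have l0: "log 2 (real n) \<ge> 0" using n_pos by simp
  have m0: "m \<ge> 0" using l0 by (simp add: m_def)
  have space_ok: "measure ?M (space ?M) \<ge> 1 - 2 * real_of_int m * exp (- t)"
    using m0 by (simp add: Q.prob_space)
  have main: "\<exists>E \<in> sets ?M. measure ?M E \<ge> 1 - 2 * real_of_int m * exp (- t) \<and>
              (\<forall>S \<in> E. \<forall>w_hat. norm w_hat \<le> R \<longrightarrow>
                 (\<forall>w. norm w \<le> R \<longrightarrow> emp_risk n S loss w_hat \<le> emp_risk n S loss w) \<longrightarrow>
                 pop_risk P loss w_hat - pop_risk P loss w_star \<le> C * X / real n)"
  proof (cases "\<theta> > G\<^sup>2")
    case True
    have ex: "pop_risk P loss w_hat - pop_risk P loss w_star \<le> C * X / real n" for w_hat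
      using degenerate[OF True assumption_I, of w_hat] degenerate[OF True assumption_I, of w_star] RHS0
      by simp
    show ?thesis
      by (intro bexI[of _ "space ?M"] conjI ballI allI impI ex space_ok) simp
  next
    case False
    then have thG: "\<theta> \<le> G\<^sup>2" by simp
    show ?thesis
    proof (cases "n = 1")
      case True
      have "pop_risk P loss w_hat - pop_risk P loss w_star \<le> C * X / real n" if "norm w_hat \<le> R" for w_hat
      proof -
        have "pop_risk P loss w_hat - pop_risk P loss w_star \<le> 2 * G * R" by (rule excess_trivial[OF that])
        also have "\<dots> \<le> C * 2" using C28 GR by linarith
        also have "\<dots> \<le> C * X" using C0 t_pos True by (intro mult_left_mono) (auto simp: X_def)
        finally show ?thesis using True by simp
      qed
      then show ?thesis
        by (intro bexI[of _ "space ?M"] conjI ballI allI impI space_ok) simp_all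
    next
      case False
      then have n2: "n \<ge> 2" using n_pos by simp
      define \<eta> where "\<eta> = min \<alpha> (1 / (G * R))"
      obtain E where E: "E \<in> sets ?M" and mE: "measure ?M E \<ge> 1 - exp (- t)"
        and bE: "\<forall>S \<in> E. \<forall>w_hat. norm w_hat \<le> R \<longrightarrow>
              (\<forall>w. norm w \<le> R \<longrightarrow> emp_risk n S loss w_hat \<le> emp_risk n S loss w) \<longrightarrow>
              pop_risk P loss w_hat - pop_risk P loss w_star
                \<le> 20 * (t + real DIM('a) * ln (2 * real n + 1)) / (real n * \<eta>)
                   + 22 * G * R * real DIM('a) / real n"
        using main_good[OF n2 t_pos \<eta>_def] by blast
      have m1: "m \<ge> 1"
      proof -
        have "log 2 (real n) \<ge> log 2 2" using n2 by simp
        then have "log 2 (real n) > 0" by simp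
        then show ?thesis by (simp add: m_def)
      qed
      have "1 - exp (- t) \<ge> 1 - 2 * real_of_int m * exp (- t)"
      proof -
        have "real_of_int m \<ge> 1" using m1 by simp
        then have "2 * real_of_int m * exp (- t) \<ge> 1 * exp (- t)" by (intro mult_right_mono) auto
        then show ?thesis by simp
      qed
      then have mE': "measure ?M E \<ge> 1 - 2 * real_of_int m * exp (- t)" using mE by linarith
      have fa: "20 * (t + real DIM('a) * ln (2 * real n + 1)) / (real n * \<eta>)
                   + 22 * G * R * real DIM('a) / real n \<le> C * X / real n"
        unfolding C_def X_def
        by (rule final_arith[OF G_pos R_pos alpha_pos theta_pos thG t_pos n2 \<eta>_def \<gamma>_def rho])
      show ?thesis
      proof (intro bexI[of _ E] conjI ballI allI impI)
        fix S w_hat assume S: "S \<in> E" and wh: "norm w_hat \<le> R"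
          and erm: "\<forall>w. norm w \<le> R \<longrightarrow> emp_risk n S loss w_hat \<le> emp_risk n S loss w"
        show "pop_risk P loss w_hat - pop_risk P loss w_star \<le> C * X / real n"
          using bE S wh erm fa by (meson order_trans)
      qed (use E mE' in auto)
    qed
  qed
  show ?thesis unfolding Let_def
    using main by (simp only: \<gamma>_def \<rho>_def m_def C_def X_def)
qed


end
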